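(* Let $G,H$ be graded groups, $U\subset G$ open, $\Phi:U\to H$ a smooth map and $x\in U$. If $\Phi$ is Pansu differentiable at $x$, then $\Phi$ preserves the filtration at $x$.
   Context: A graded group is a connected, simply connected nilpotent real Lie group $G$ whose Lie algebra $\mathfrak g=\bigoplus_{j\ge1}\mathfrak g_j$ (finitely many nonzero) satisfies $[\mathfrak g_i,\mathfrak g_j]\subset\mathfrak g_{i+j}$; $\exp_G$ is a global diffeomorphism. Dilations: $\delta_rX=r^jX$ for $X\in\mathfrak g_j$, $r>0$, and $\delta_r(\exp_GX)=\exp_G(\delta_rX)$. $H$ is a graded group with Lie algebra $\mathfrak h=\bigoplus_j\mathfrak h_j$. For $x\in G$, $\tau^G_x=D_0L_x:\mathfrak g\to T_xG$ (differential of left translation at the identity), similarly $\tau^H$. For smooth $\Phi$, $\mathfrak d_x\Phi:=(\tau^H_{\Phi(x)})^{-1}\circ D_x\Phi\circ\tau^G_x:\mathfrak g\to\mathfrak h$; $\Phi$ preserves the filtration at $x$ if $\mathfrak d_x\Phi(\mathfrak g_j)\subset\mathfrak h_1\oplus\dots\oplus\mathfrak h_j$ for every $j$. $\Phi$ is Pansu differentiable at $x$ if for every $z\in G$ the limit $\lim_{\varepsilon\to0^+}\delta_{\varepsilon^{-1}}(\Phi(x)^{-1}\Phi(x\delta_\varepsilon z))$ exists. *)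

theory Defs
  imports "HOL-Analysis.Analysis"
begin

text \<open>Graded groups are modelled in exponential coordinates: the underlying manifold of G
is its Lie algebra (a finite-dimensional real vector space, type of class euclidean_space),
exp is the identity, the identity element is 0, and the group law is a smooth map.\<close>

fun iter_dd :: "'a::real_normed_vector list \<Rightarrow> ('a \<Rightarrow> 'b::real_normed_vector) \<Rightarrow> 'a \<Rightarrow> 'b" where
  "iter_dd [] f = f"
| "iter_dd (v # vs) f = (\<lambda>x. frechet_derivative (iter_dd vs f) (at x) v)"

definition smooth_on :: "'a::real_normed_vector set \<Rightarrow> ('a \<Rightarrow> 'b::real_normed_vector) \<Rightarrow> bool" where
  "smooth_on U f \<longleftrightarrow> (\<forall>vs. \<forall>x\<in>U. iter_dd vs f differentiable (at x))"

definition ginv :: "('g \<Rightarrow> 'g \<Rightarrow> 'g::zero) \<Rightarrow> 'g \<Rightarrow> 'g" where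
  "ginv mul y = (THE z. mul y z = 0 \<and> mul z y = 0)"

text \<open>Lie bracket in exponential coordinates, via the group commutator:
  exp(tX) exp(tY) exp(tX)^{-1} exp(tY)^{-1} = exp(t^2 [X,Y] + O(t^3)).\<close>
definition lie_bracket :: "('g::real_normed_vector \<Rightarrow> 'g \<Rightarrow> 'g) \<Rightarrow> 'g \<Rightarrow> 'g \<Rightarrow> 'g" where
  "lie_bracket mul X Y = Lim (at_right (0::real))
     (\<lambda>t. (1 / t^2) *\<^sub>R mul (mul (t *\<^sub>R X) (t *\<^sub>R Y)) (mul (ginv mul (t *\<^sub>R X)) (ginv mul (t *\<^sub>R Y))))"

definition graded_decomp :: "(nat \<Rightarrow> 'g::euclidean_space set) \<Rightarrow> nat \<Rightarrow> bool" where
  "graded_decomp V s \<longleftrightarrow> (\<forall>j. subspace (V j)) \<and> V 0 = {0} \<and> (\<forall>j>s. V j = {0}) \<and>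
     (\<forall>x. \<exists>!c. (\<forall>j. c j \<in> V j) \<and> x = (\<Sum>j\<in>{1..s}. c j))"

definition grade_comp :: "(nat \<Rightarrow> 'g::euclidean_space set) \<Rightarrow> nat \<Rightarrow> 'g \<Rightarrow> nat \<Rightarrow> 'g" where
  "grade_comp V s x = (THE c. (\<forall>j. c j \<in> V j) \<and> x = (\<Sum>j\<in>{1..s}. c j))"

definition dil :: "(nat \<Rightarrow> 'g::euclidean_space set) \<Rightarrow> nat \<Rightarrow> real \<Rightarrow> 'g \<Rightarrow> 'g" where
  "dil V s r x = (\<Sum>j\<in>{1..s}. (r ^ j) *\<^sub>R grade_comp V s x j)"

definition graded_group :: "('g::euclidean_space \<Rightarrow> 'g \<Rightarrow> 'g) \<Rightarrow> (nat \<Rightarrow> 'g set) \<Rightarrow> nat \<Rightarrow> bool" where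
  "graded_group mul V s \<longleftrightarrow>
     smooth_on UNIV (\<lambda>p. mul (fst p) (snd p)) \<and>
     (\<forall>x y z. mul (mul x y) z = mul x (mul y z)) \<and>
     (\<forall>x. mul 0 x = x \<and> mul x 0 = x) \<and>
     (\<forall>x. \<exists>y. mul x y = 0 \<and> mul y x = 0) \<and>
     (\<forall>X a b. mul (a *\<^sub>R X) (b *\<^sub>R X) = (a + b) *\<^sub>R X) \<and>
     graded_decomp V s \<and>
     (\<forall>i j X Y. X \<in> V i \<longrightarrow> Y \<in> V j \<longrightarrow> lie_bracket mul X Y \<in> V (i + j))"

definition tau :: "('g::real_normed_vector \<Rightarrow> 'g \<Rightarrow> 'g) \<Rightarrow> 'g \<Rightarrow> 'g \<Rightarrow> 'g" where
  "tau mul x = frechet_derivative (mul x) (at 0)"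

definition frak_d :: "('g::real_normed_vector \<Rightarrow> 'g \<Rightarrow> 'g) \<Rightarrow> ('h::real_normed_vector \<Rightarrow> 'h \<Rightarrow> 'h)
    \<Rightarrow> ('g \<Rightarrow> 'h) \<Rightarrow> 'g \<Rightarrow> 'g \<Rightarrow> 'h" where
  "frak_d mulG mulH \<Phi> x = inv (tau mulH (\<Phi> x)) \<circ> frechet_derivative \<Phi> (at x) \<circ> tau mulG x"

definition preserves_filtration_at ::
  "('g::euclidean_space \<Rightarrow> 'g \<Rightarrow> 'g) \<Rightarrow> (nat \<Rightarrow> 'g set) \<Rightarrow> ('h::euclidean_space \<Rightarrow> 'h \<Rightarrow> 'h) \<Rightarrow> (nat \<Rightarrow> 'h set)
    \<Rightarrow> ('g \<Rightarrow> 'h) \<Rightarrow> 'g \<Rightarrow> bool" where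
  "preserves_filtration_at mulG VG mulH VH \<Phi> x \<longleftrightarrow>
     (\<forall>j. frak_d mulG mulH \<Phi> x ` VG j \<subseteq> {(\<Sum>i\<in>{1..j}. w i) | w. \<forall>i. w i \<in> VH i})"

definition pansu_differentiable_at ::
  "('g::euclidean_space \<Rightarrow> 'g \<Rightarrow> 'g) \<Rightarrow> (nat \<Rightarrow> 'g set) \<Rightarrow> nat \<Rightarrow>
   ('h::euclidean_space \<Rightarrow> 'h \<Rightarrow> 'h) \<Rightarrow> (nat \<Rightarrow> 'h set) \<Rightarrow> nat \<Rightarrow> ('g \<Rightarrow> 'h) \<Rightarrow> 'g \<Rightarrow> bool" where
  "pansu_differentiable_at mulG VG sG mulH VH sH \<Phi> x \<longleftrightarrow>
     (\<forall>z. \<exists>L. ((\<lambda>\<epsilon>. dil VH sH (1 / \<epsilon>) (mulH (ginv mulH (\<Phi> x)) (\<Phi> (mulG x (dil VG sG \<epsilon> z)))))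
                 \<longlongrightarrow> L) (at_right 0))"

end

theory Submission
  imports Defs
begin

lemma gd_uniq:
  assumes "graded_decomp V s"
  shows "\<exists>!c. (\<forall>j. c j \<in> V j) \<and> x = (\<Sum>j\<in>{1..s}. c j)"
  using assms unfolding graded_decomp_def
  by (drule_tac conjunct2, drule_tac conjunct2, drule_tac conjunct2) (erule spec)

lemma gc_unique:
  assumes "graded_decomp V s" "\<forall>j. c j \<in> V j" "x = (\<Sum>j\<in>{1..s}. c j)"
  shows "grade_comp V s x = c"
  unfolding grade_comp_def
  by (rule the1_equality[OF gd_uniq[OF assms(1)]]) (use assms in simp)

lemma gc_props:
  assumes "graded_decomp V s"
  shows "(\<forall>j. grade_comp V s x j \<in> V j) \<and> x = (\<Sum>j\<in>{1..s}. grade_comp V s x j)"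
  unfolding grade_comp_def
  by (rule theI'[OF gd_uniq[OF assms]])

lemma gc_linear:
  assumes "graded_decomp V s"
  shows "linear (\<lambda>x. grade_comp V s x i)"
proof -
  have sub: "\<And>j. subspace (V j)" using assms unfolding graded_decomp_def by blast
  have add: "grade_comp V s (x + y) = (\<lambda>j. grade_comp V s x j + grade_comp V s y j)" for x y
    apply (rule gc_unique[OF assms])
    using gc_props[OF assms, of x] gc_props[OF assms, of y] sub
    by (auto simp: subspace_add sum.distrib)
  have sc: "grade_comp V s (c *\<^sub>R x) = (\<lambda>j. c *\<^sub>R grade_comp V s x j)" for c x
    apply (rule gc_unique[OF assms])
    using gc_props[OF assms, of x] sub
    by (auto simp: subspace_scale scaleR_sum_right[symmetric])
  show ?thesis
    by (rule linearI) (simp_all add: add sc)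
qed

lemma gc_dil:
  assumes "graded_decomp V s"
  shows "grade_comp V s (dil V s r y) k = r ^ k *\<^sub>R grade_comp V s y k"
proof -
  have sub: "\<And>j. subspace (V j)" using assms unfolding graded_decomp_def by blast
  have "grade_comp V s (dil V s r y) = (\<lambda>k. r ^ k *\<^sub>R grade_comp V s y k)"
    apply (rule gc_unique[OF assms])
    using gc_props[OF assms, of y] sub
    by (auto simp: subspace_scale dil_def)
  then show ?thesis by simp
qed

lemma dil_homog:
  assumes "graded_decomp V s" "X \<in> V j" "X \<noteq> 0"
  shows "dil V s r X = r ^ j *\<^sub>R X" "1 \<le> j" "j \<le> s"
proof -
  have sub: "\<And>j. subspace (V j)" and V0: "V 0 = {0}" and Vs: "\<forall>j>s. V j = {0}"
    using assms unfolding graded_decomp_def by blast+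
  show j1: "1 \<le> j" using assms V0 by (cases j) auto
  show js: "j \<le> s" by (rule ccontr) (use assms Vs in auto)
  have "grade_comp V s X = (\<lambda>k. if k = j then X else 0)"
  proof (rule gc_unique[OF assms(1)])
    show "\<forall>k. (if k = j then X else 0) \<in> V k"
      using assms(2) subspace_0[OF sub] by simp
    show "X = (\<Sum>k\<in>{1..s}. if k = j then X else 0)"
      using j1 js by (simp add: sum.delta)
  qed
  then have "dil V s r X = (\<Sum>k\<in>{1..s}. if k = j then r ^ k *\<^sub>R X else 0)"
    unfolding dil_def by (intro sum.cong) auto
  also have "\<dots> = r ^ j *\<^sub>R X" using j1 js by (simp add: sum.delta)
  finally show "dil V s r X = r ^ j *\<^sub>R X" .
qed


lemma ginv_props:
  assumes "graded_group mul V s"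
  shows "mul y (ginv mul y) = 0 \<and> mul (ginv mul y) y = 0"
proof -
  have assoc: "\<And>x y z. mul (mul x y) z = mul x (mul y z)"
    and unit: "\<And>x. mul 0 x = x \<and> mul x 0 = x"
    and ex: "\<And>x. \<exists>y. mul x y = 0 \<and> mul y x = 0"
    using assms unfolding graded_group_def by blast+
  obtain z where z: "mul y z = 0 \<and> mul z y = 0" using ex by blast
  have uq: "z' = z" if "mul y z' = 0 \<and> mul z' y = 0" for z'
  proof -
    have "z' = mul z' (mul y z)" using z unit by simp
    also have "\<dots> = mul (mul z' y) z" using assoc by simp
    also have "\<dots> = z" using that unit by simp
    finally show ?thesis .
  qed
  show ?thesis unfolding ginv_def
    apply (rule theI[of _ z]) using z uq by blast+
qed

lemma mul_has_deriv:
  assumes "graded_group mul V s"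
  shows "(mul a has_derivative frechet_derivative (mul a) (at y)) (at y)"
proof -
  have "smooth_on UNIV (\<lambda>p. mul (fst p) (snd p))" using assms unfolding graded_group_def by blast
  then have d: "(\<lambda>p. mul (fst p) (snd p)) differentiable (at (a, y))"
    unfolding smooth_on_def by (metis UNIV_I iter_dd.simps(1))
  then obtain D where D: "((\<lambda>p. mul (fst p) (snd p)) has_derivative D) (at (a, y))"
    unfolding differentiable_def by blast
  have P: "((\<lambda>y. (a, y)) has_derivative (\<lambda>h. (0, h))) (at y)"
    by (auto intro!: derivative_eq_intros)
  have "((\<lambda>y. mul a y) has_derivative (\<lambda>h. D (0, h))) (at y)"
    using has_derivative_compose[OF P, of "\<lambda>p. mul (fst p) (snd p)" D] D by simp
  then have "mul a differentiable (at y)" unfolding differentiable_def by blast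
  then show ?thesis using frechet_derivative_works by blast
qed

theorem lemma2p5:
  fixes mulG :: "'g::euclidean_space \<Rightarrow> 'g \<Rightarrow> 'g" and VG :: "nat \<Rightarrow> 'g set" and sG :: nat
    and mulH :: "'h::euclidean_space \<Rightarrow> 'h \<Rightarrow> 'h" and VH :: "nat \<Rightarrow> 'h set" and sH :: nat
    and U :: "'g set" and \<Phi> :: "'g \<Rightarrow> 'h" and x :: 'g
  assumes "graded_group mulG VG sG"
    and "graded_group mulH VH sH"
    and "open U"
    and "smooth_on U \<Phi>"
    and "x \<in> U"
    and "pansu_differentiable_at mulG VG sG mulH VH sH \<Phi> x"
  shows "preserves_filtration_at mulG VG mulH VH \<Phi> x"
proof -
  note gG = assms(1) and gH = assms(2)
  have gdG: "graded_decomp VG sG" using gG unfolding graded_group_def by blast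
  have gdH: "graded_decomp VH sH" using gH unfolding graded_group_def by blast
  have assocH: "\<And>x y z. mulH (mulH x y) z = mulH x (mulH y z)"
    and unitH: "\<And>x. mulH 0 x = x \<and> mulH x 0 = x"
    using gH unfolding graded_group_def by blast+
  have unitG: "\<And>y. mulG 0 y = y \<and> mulG y 0 = y"
    using gG unfolding graded_group_def by blast+
  define b where "b = \<Phi> x"
  define a where "a = ginv mulH b"
  define DG where "DG = tau mulG x"
  define DP where "DP = frechet_derivative \<Phi> (at x)"
  define DA where "DA = frechet_derivative (mulH a) (at b)"
  define TB where "TB = tau mulH b"
  have hG: "(mulG x has_derivative DG) (at 0)"
    unfolding DG_def tau_def by (rule mul_has_deriv[OF gG])
  have "iter_dd [] \<Phi> differentiable (at x)"
    using assms(4,5) unfolding smooth_on_def by blast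
  then have hP: "(\<Phi> has_derivative DP) (at x)"
    unfolding DP_def using frechet_derivative_works by auto
  have hA: "(mulH a has_derivative DA) (at b)"
    unfolding DA_def by (rule mul_has_deriv[OF gH])
  have hB: "(mulH b has_derivative TB) (at 0)"
    unfolding TB_def tau_def by (rule mul_has_deriv[OF gH])
  have inv1: "mulH b a = 0" "mulH a b = 0"
    using ginv_props[OF gH, of b] unfolding a_def by auto
  have c1: "(\<lambda>y. mulH a (mulH b y)) = (\<lambda>y. y)"
    using assocH unitH inv1 by (metis)
  have c2: "(\<lambda>y. mulH b (mulH a y)) = (\<lambda>y. y)"
    using assocH unitH inv1 by (metis)
  have "((\<lambda>y. mulH a (mulH b y)) has_derivative (\<lambda>h. DA (TB h))) (at 0)"
    by (rule has_derivative_compose[OF hB]) (use hA unitH in simp)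
  then have e1: "(\<lambda>h. DA (TB h)) = (\<lambda>h. h)"
    using has_derivative_unique has_derivative_ident c1 by metis
  have "((\<lambda>y. mulH b (mulH a y)) has_derivative (\<lambda>h. TB (DA h))) (at b)"
    by (rule has_derivative_compose[OF hA]) (use hB inv1 in simp)
  then have e2: "(\<lambda>h. TB (DA h)) = (\<lambda>h. h)"
    using has_derivative_unique has_derivative_ident c2 by metis
  have invTB: "inv TB = DA"
    by (rule inv_unique_comp) (use e1 e2 in \<open>auto simp: fun_eq_iff\<close>)
  have linG: "linear DG" and linP: "linear DP" and linA: "linear DA"
    using hG hP hA has_derivative_linear by blast+
  have fd: "frak_d mulG mulH \<Phi> x = (\<lambda>X. DA (DP (DG X)))"
    unfolding frak_d_def invTB[symmetric] TB_def b_def DP_def DG_def by (simp add: o_def)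
  have main: "DA (DP (DG X)) \<in> {(\<Sum>i\<in>{1..j}. w i) | w. \<forall>i. w i \<in> VH i}" if X: "X \<in> VG j" for X j
  proof -
    define W where "W = DA (DP (DG X))"
    define c where "c = grade_comp VH sH W"
    have cV: "\<forall>i. c i \<in> VH i" and Wsum: "W = (\<Sum>i\<in>{1..sH}. c i)"
      using gc_props[OF gdH, of W] unfolding c_def by auto
    have c0: "c i = 0" if ij: "i > j" for i
    proof (cases "X = 0")
      case True
      then have "W = 0" unfolding W_def using linG linP linA by (simp add: linear_0)
      then show ?thesis unfolding c_def using linear_0[OF gc_linear[OF gdH, of i]] by simp
    next
      case False
      have j1: "1 \<le> j" and dilX: "\<And>e. dil VG sG e X = e ^ j *\<^sub>R X"
        using dil_homog[OF gdG X False] by auto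
      define \<gamma> where "\<gamma> = (\<lambda>t::real. mulH a (\<Phi> (mulG x (t *\<^sub>R X))))"
      have g0: "\<gamma> 0 = 0" unfolding \<gamma>_def using unitG inv1 b_def by simp
      have hs: "((\<lambda>t::real. t *\<^sub>R X) has_derivative (\<lambda>t. t *\<^sub>R X)) (at 0 within {0<..})"
        by (auto intro!: derivative_eq_intros)
      have hG': "(mulG x has_derivative DG) (at (0 *\<^sub>R X))" using hG by simp
      have hP': "(\<Phi> has_derivative DP) (at (mulG x (0 *\<^sub>R X)))" using hP unitG by simp
      have hA': "(mulH a has_derivative DA) (at (\<Phi> (mulG x (0 *\<^sub>R X))))" using hA unitG b_def by simp
      have hg: "(\<gamma> has_derivative (\<lambda>t. DA (DP (DG (t *\<^sub>R X))))) (at 0 within {0<..})"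
        unfolding \<gamma>_def
        by (rule has_derivative_compose[OF has_derivative_compose[OF has_derivative_compose[OF hs hG'] hP'] hA'])
      have lW: "(\<lambda>t. DA (DP (DG (t *\<^sub>R X)))) = (\<lambda>t. t *\<^sub>R W)"
        unfolding W_def using linG linP linA by (simp add: linear_cmul)
      have "((\<lambda>y. ((\<gamma> y - \<gamma> 0) - y *\<^sub>R W) /\<^sub>R norm (y - 0)) \<longlongrightarrow> 0) (at 0 within {0<..})"
        using hg unfolding lW has_derivative_at_within by simp
      then have t1: "((\<lambda>y. (1 / y) *\<^sub>R \<gamma> y - W) \<longlongrightarrow> 0) (at_right 0)"
      proof (rule Lim_transform_eventually)
        have "eventually (\<lambda>t::real. t > 0) (at_right 0)" by (simp add: eventually_at_filter)
        then show "eventually (\<lambda>y. ((\<gamma> y - \<gamma> 0) - y *\<^sub>R W) /\<^sub>R norm (y - 0) = (1 / y) *\<^sub>R \<gamma> y - W) (at_right 0)"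
          by eventually_elim (simp add: g0 scaleR_diff_right divide_inverse_commute)
      qed
      have lim1: "((\<lambda>y. (1 / y) *\<^sub>R \<gamma> y) \<longlongrightarrow> W) (at_right 0)"
        using tendsto_add[OF t1 tendsto_const[of W]] by simp
      have fj: "filterlim (\<lambda>e::real. e ^ j) (at_right 0) (at_right 0)"
        unfolding filterlim_at
      proof
        have "eventually (\<lambda>t::real. t > 0) (at_right 0)" by (simp add: eventually_at_filter)
        then show "eventually (\<lambda>e::real. e ^ j \<in> {0<..} \<and> e ^ j \<noteq> 0) (at_right 0)"
          by eventually_elim simp
        have "((\<lambda>e::real. e ^ j) \<longlongrightarrow> 0 ^ j) (at_right 0)"
          by (intro tendsto_intros)
        then show "((\<lambda>e::real. e ^ j) \<longlongrightarrow> 0) (at_right 0)" using j1 by simp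
      qed
      have A: "((\<lambda>e. (1 / e ^ j) *\<^sub>R \<gamma> (e ^ j)) \<longlongrightarrow> W) (at_right 0)"
        using filterlim_compose[OF lim1 fj] by simp
      obtain L where "((\<lambda>\<epsilon>. dil VH sH (1 / \<epsilon>) (mulH (ginv mulH (\<Phi> x)) (\<Phi> (mulG x (dil VG sG \<epsilon> X)))))
                 \<longlongrightarrow> L) (at_right 0)"
        using assms(6) unfolding pansu_differentiable_at_def by blast
      then have B: "((\<lambda>e. dil VH sH (1 / e) (\<gamma> (e ^ j))) \<longlongrightarrow> L) (at_right 0)"
        unfolding dilX \<gamma>_def a_def b_def .
      define P where "P = (\<lambda>y. grade_comp VH sH y i)"
      have linPi: "linear P" unfolding P_def by (rule gc_linear[OF gdH])
      then have blP: "bounded_linear P" by (simp add: linear_conv_bounded_linear)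
      have B': "((\<lambda>e. (1 / e) ^ i *\<^sub>R P (\<gamma> (e ^ j))) \<longlongrightarrow> P L) (at_right 0)"
        using bounded_linear.tendsto[OF blP B] unfolding P_def gc_dil[OF gdH] .
      have z: "((\<lambda>e::real. e ^ (i - j)) \<longlongrightarrow> 0) (at_right 0)"
      proof -
        have "((\<lambda>e::real. e ^ (i - j)) \<longlongrightarrow> 0 ^ (i - j)) (at_right 0)"
          by (intro tendsto_intros)
        then show ?thesis using ij by simp
      qed
      have C: "((\<lambda>e. e ^ (i - j) *\<^sub>R ((1 / e) ^ i *\<^sub>R P (\<gamma> (e ^ j)))) \<longlongrightarrow> 0 *\<^sub>R P L) (at_right 0)"
        by (rule tendsto_scaleR[OF z B'])
      have A': "((\<lambda>e. (1 / e ^ j) *\<^sub>R P (\<gamma> (e ^ j))) \<longlongrightarrow> P W) (at_right 0)"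
        using bounded_linear.tendsto[OF blP A] linPi by (simp add: linear_cmul)
      have ev: "eventually (\<lambda>e. e ^ (i - j) *\<^sub>R ((1 / e) ^ i *\<^sub>R P (\<gamma> (e ^ j))) = (1 / e ^ j) *\<^sub>R P (\<gamma> (e ^ j))) (at_right 0)"
      proof -
        have "eventually (\<lambda>t::real. t > 0) (at_right 0)" by (simp add: eventually_at_filter)
        then show ?thesis
        proof eventually_elim
          case (elim e)
          have h: "e ^ i = e ^ (i - j) * e ^ j" using ij by (metis le_add_diff_inverse2 less_imp_le power_add)
          have "(1/e)^i = 1/(e^(i-j)*e^j)" using h by (simp add: power_one_over)
          moreover have "e^(i-j) \<noteq> 0" "e ^ j \<noteq> 0" using elim by auto
          ultimately have "e ^ (i - j) * (1 / e) ^ i = 1 / e ^ j" by simp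
          then show ?case by (simp only: scaleR_scaleR)
        qed
      qed
      have C0: "((\<lambda>e. e ^ (i - j) *\<^sub>R ((1 / e) ^ i *\<^sub>R P (\<gamma> (e ^ j)))) \<longlongrightarrow> 0) (at_right 0)"
        using C by (simp only: scaleR_zero_left)
      have C': "((\<lambda>e. (1 / e ^ j) *\<^sub>R P (\<gamma> (e ^ j))) \<longlongrightarrow> 0) (at_right 0)"
        by (rule Lim_transform_eventually[OF C0 ev])
      have "P W = 0" using tendsto_unique[OF _ A' C'] by simp
      then show ?thesis unfolding P_def c_def .
    qed
    define M where "M = max j sH"
    have s1: "(\<Sum>i\<in>{1..sH}. c i) = (\<Sum>i\<in>{1..M}. c i)"
    proof (rule sum.mono_neutral_left)
      have Vz: "\<forall>i>sH. VH i = {0}" using gdH unfolding graded_decomp_def by blast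
      show "\<forall>i\<in>{1..M} - {1..sH}. c i = 0"
      proof
        fix i assume "i \<in> {1..M} - {1..sH}"
        then have "i > sH" by auto
        then show "c i = 0" using cV[rule_format, of i] Vz by auto
      qed
    qed (auto simp: M_def)
    have s2: "(\<Sum>i\<in>{1..j}. c i) = (\<Sum>i\<in>{1..M}. c i)"
    proof (rule sum.mono_neutral_left)
      show "\<forall>i\<in>{1..M} - {1..j}. c i = 0"
      proof
        fix i assume "i \<in> {1..M} - {1..j}"
        then have "i > j" by auto
        then show "c i = 0" by (rule c0)
      qed
    qed (auto simp: M_def)
    have "W = (\<Sum>i\<in>{1..j}. c i)" using Wsum s1 s2 by simp
    then show ?thesis unfolding W_def using cV by blast
  qed
  show ?thesis
    unfolding preserves_filtration_at_def fd using main by blast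
qed

end
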